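(* Let $a\ge 0$ and $i\ge 1$ be integers, and for $j\in\{1,\dots,2i\}$ define $f_a(i,j)=\frac{(a+1)(a+2)\cdots(a+2i)}{a+j}$. Then $$v_2\Big(\sum_{j=1}^{2i}f_a(i,j)\Big)\ge\begin{cases} i-1, & \text{if } 1\le i\le 3,\\ i, & \text{otherwise.}\end{cases}$$
   Context: $v_2$ denotes the $2$-adic valuation. *)

theory Defs
  imports "HOL-Computational_Algebra.Computational_Algebra"
begin

text \<open>f_a(i,j) = (a+1)(a+2)...(a+2i) / (a+j); the division is exact since 1 <= j <= 2i.\<close>
definition f :: "nat \<Rightarrow> nat \<Rightarrow> nat \<Rightarrow> nat" where
  "f a i j = (\<Prod>k=1..2*i. a + k) div (a + j)"

end

theory Submission
  imports Defs
begin

lemma card_even: "card {k\<in>{1..2*i}. even ((a::nat)+k)} = i"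
proof (induction i)
  case 0 then show ?case by simp
next
  case (Suc i)
  have "{k\<in>{1..2*Suc i}. even (a+k)} = {k\<in>{1..2*i}. even (a+k)} \<union> {k\<in>{2*i+1,2*i+2}. even (a+k)}"
    by auto
  moreover have "card {k\<in>{2*i+1,2*i+2}. even (a+k)} = 1"
  proof (cases "even (a + 2*i + 1)")
    case True
    then have "{k\<in>{2*i+1,2*i+2}. even (a+k)} = {2*i+1}" by auto
    then show ?thesis by simp
  next
    case False
    then have "{k\<in>{2*i+1,2*i+2}. even (a+k)} = {2*i+2}" by auto
    then show ?thesis by simp
  qed
  moreover have "{k\<in>{1..2*i}. even (a+k)} \<inter> {k\<in>{2*i+1,2*i+2}. even (a+k)} = {}" by auto
  ultimately show ?case using Suc by (simp add: card_Un_disjoint)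
qed

lemma pow_dvd_prod:
  assumes "finite A"
  shows "(2::nat) ^ card {k\<in>A. even ((a::nat)+k)} dvd (\<Prod>k\<in>A. a + k)"
proof -
  let ?E = "{k\<in>A. even (a+k)}"
  have "(2::nat) ^ card ?E = (\<Prod>k\<in>?E. 2)" by simp
  also have "\<dots> dvd (\<Prod>k\<in>?E. a + k)" by (rule prod_dvd_prod) auto
  also have "\<dots> dvd (\<Prod>k\<in>A. a + k)" by (rule prod_dvd_prod_subset) (use assms in auto)
  finally show ?thesis .
qed

lemma f_eq:
  assumes "j \<in> {1..2*i}"
  shows "f a i j = (\<Prod>k\<in>{1..2*i}-{j}. a + k)"
proof -
  have "(\<Prod>k=1..2*i. a + k) = (a+j) * (\<Prod>k\<in>{1..2*i}-{j}. a + k)"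
    using assms by (simp add: prod.remove)
  moreover have "a + j > 0" using assms by auto
  ultimately show ?thesis unfolding f_def by simp
qed

lemma term_dvd1:
  assumes "j \<in> {1..2*i}"
  shows "(2::nat) ^ (i - 1) dvd f a i j"
proof -
  let ?D = "{1..2*i}-{j}"
  define E where "E = {k\<in>{1..2*i}. even (a+k)}"
  have cE: "card E = i" unfolding E_def by (rule card_even)
  have "card E - card {j} \<le> card (E - {j})"
    by (rule diff_card_le_card_Diff) simp
  moreover have "E - {j} = {k\<in>?D. even (a+k)}" unfolding E_def by auto
  ultimately have "i - 1 \<le> card {k\<in>?D. even (a+k)}" using cE by simp
  then have "(2::nat)^(i-1) dvd 2 ^ card {k\<in>?D. even (a+k)}" by (rule le_imp_power_dvd)
  also have "\<dots> dvd (\<Prod>k\<in>?D. a + k)" by (rule pow_dvd_prod) simp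
  finally show ?thesis using f_eq[OF assms] by simp
qed

lemma term_dvd2:
  assumes "j \<in> {1..2*i}" "i \<ge> 4"
  shows "(2::nat) ^ i dvd f a i j"
proof -
  define k1 where "k1 = 4 - a mod 4"
  have m1: "a mod 4 < 4" by simp
  have m2: "a = 4*(a div 4) + a mod 4" by simp
  have e1: "a + k1 = 4*(a div 4) + 4" unfolding k1_def using m1 m2 by linarith
  have e2: "a + (k1+4) = 4*(a div 4) + 8" unfolding k1_def using m1 m2 by linarith
  have d1: "(4::nat) dvd 4*(a div 4) + 4" "(4::nat) dvd 4*(a div 4) + 8" by simp_all
  have k1: "1 \<le> k1" "k1 \<le> 4" "4 dvd a + k1" "4 dvd a + (k1 + 4)"
    using m1 e1 e2 d1 unfolding k1_def by simp_all
  obtain ks where ks: "ks \<in> {1..2*i}" "ks \<noteq> j" "4 dvd a + ks"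
  proof (cases "k1 = j")
    case True
    then show ?thesis using that[of "k1+4"] k1 assms by auto
  next
    case False
    then show ?thesis using that[of k1] k1 assms by auto
  qed
  let ?D = "{1..2*i}-{j}"
  let ?D2 = "?D - {ks}"
  define E where "E = {k\<in>{1..2*i}. even (a+k)}"
  have cE: "card E = i" unfolding E_def by (rule card_even)
  have "card E - card {j, ks} \<le> card (E - {j, ks})"
    by (rule diff_card_le_card_Diff) simp
  moreover have "E - {j, ks} = {k\<in>?D2. even (a+k)}" unfolding E_def by auto
  moreover have "card {j, ks} = 2" using ks by simp
  ultimately have "i - 2 \<le> card {k\<in>?D2. even (a+k)}" using cE by simp
  then have "(2::nat)^(i-2) dvd 2 ^ card {k\<in>?D2. even (a+k)}" by (rule le_imp_power_dvd)
  also have "\<dots> dvd (\<Prod>k\<in>?D2. a + k)" by (rule pow_dvd_prod) simp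
  finally have h: "(2::nat)^(i-2) dvd (\<Prod>k\<in>?D2. a + k)" .
  have "(\<Prod>k\<in>?D. a + k) = (a + ks) * (\<Prod>k\<in>?D2. a + k)"
    using ks by (simp add: prod.remove)
  moreover have "(2::nat)^i = 4 * 2^(i-2)"
  proof -
    obtain m where "i = m + 2" using assms by (metis le_add_diff_inverse2 add_leD2 numeral_Bit0 le_add2 order_trans)
    then show ?thesis by simp
  qed
  ultimately have "(2::nat)^i dvd (\<Prod>k\<in>?D. a + k)" using h ks(3) by (simp add: mult_dvd_mono)
  then show ?thesis using f_eq[OF assms(1)] by simp
qed

theorem lemma4p3:
  fixes a i :: nat
  assumes "i \<ge> 1"
  shows "multiplicity (2::nat) (\<Sum>j=1..2*i. f a i j) \<ge> (if i \<le> 3 then i - 1 else i)"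
proof -
  let ?n = "if i \<le> 3 then i - 1 else i"
  have dv: "(2::nat)^?n dvd (\<Sum>j=1..2*i. f a i j)"
    by (rule dvd_sum) (use term_dvd1 term_dvd2 in auto)
  have pos: "f a i j > 0" if "j \<in> {1..2*i}" for j
    using f_eq[OF that] by (simp add: prod_pos)
  have "(\<Sum>j=1..2*i. f a i j) \<ge> f a i 1"
    by (rule member_le_sum) (use assms in auto)
  moreover have "f a i 1 > 0" using pos assms by auto
  ultimately have "(\<Sum>j=1..2*i. f a i j) \<noteq> 0" by linarith
  then show ?thesis using multiplicity_geI[OF _ _ dv] by simp
qed

end
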